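(* Assume hypotheses (A) and (B) and that $p_{ij}=p<1/(d-1)$ for all $i\ne j$. Let $q=p/(1-(d-2)p)$, $m=\min_{1\le i\le d}(\sqrt{\mu_i}-\sqrt{\nu_i})^2$, and for $i=1,\dots,d$ $$a_i=\frac{\mu_i-\nu_i-m-\sqrt{(\mu_i+\nu_i-m)^2-4\nu_i\mu_i}}{2\nu_i},\qquad b_i=\frac{\mu_i-\nu_i-m+\sqrt{(\mu_i+\nu_i-m)^2-4\nu_i\mu_i}}{2\nu_i}$$ (so that $\{t\in\mathbb{R}_+:t(\frac{\mu_i}{1+t}-\nu_i)\ge m\}=[a_i,b_i]$ with $0<a_i\le b_i$), $\widehat a=\max_ia_i$ and $\widehat\gamma_i=\min\{b_i,\widehat a\}$. For $\gamma$ with all $\gamma_j>0$ let $$\Sigma(\gamma_1,\dots,\gamma_d)=\sum_{j=1}^d\frac{\max_{1\le i\le d}\log(1+q\gamma_i)-\log(1+q\gamma_j)}{\log(1+\gamma_j)-\log(1+q\gamma_j)}.$$ Then $$\sup_{\gamma\in\Gamma}\min_{1\le i\le d}\gamma_i\Bigl(\frac{\mu_i}{1+\gamma_i}-\nu_i\Bigr)=\min_{1\le i\le d}\bigl(\sqrt{\mu_i}-\sqrt{\nu_i}\bigr)^2$$ holds if and only if $\Sigma(\widehat\gamma_1,\dots,\widehat\gamma_d)\le1$.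
   Context: Jackson network with $d$ queues: arrival rates $\lambda_i\ge0$, service rates $\mu_i>0$, routing matrix $P=(p_{ij})_{i,j=1}^d$ nonnegative with $p_{ii}=0$, $\sum_jp_{ij}\le1$, $p_{i0}=1-\sum_jp_{ij}$. Hypothesis (A): the jump-rate kernel on $\mathbb{Z}^d$ (jumps $+\epsilon^i$ at rate $\lambda_i$, $-\epsilon^i$ at rate $\mu_ip_{i0}$, $\epsilon^j-\epsilon^i$ at rate $\mu_ip_{ij}$) is irreducible (equivalently spectral radius of $P$ $<1$ and for every $i$ some $\lambda_jp^{(n)}_{ji}>0$); then the traffic equations $\nu_j=\lambda_j+\sum_i\nu_ip_{ij}$ have a unique solution with $\nu_i>0$. Hypothesis (B): $\nu_i<\mu_i$ for all $i$. $Q_{ij}$: probability that the chain on $\{0,\dots,d\}$ with transitions $p_{ij}$ ($0$ absorbing) started at $i$ ever visits $j$ (time $0$ included). For $\gamma\in\mathbb{R}_+^d$, $\overrightarrow{\gamma_i}$ has components $\gamma_i^j=\log(1+Q_{ji}\gamma_i)$; $\Gamma$ is the set of $\gamma\in\mathbb{R}_+^d$ such that for every $i$ and nonzero $v\in\mathbb{R}_+^d$ with $v^i=0$, $\overrightarrow{\gamma_i}\cdot v<\max_j\overrightarrow{\gamma_j}\cdot v$. *)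

theory Defs
  imports Complex_Main
begin

text \<open>Queues are indexed by 1..d; vectors in R^d / Z^d are functions on nat,
  extended by zero outside {1..d}.\<close>

definition unitv :: "nat \<Rightarrow> nat \<Rightarrow> int" where
  "unitv i = (\<lambda>k. if k = i then 1 else 0)"

definition lattice :: "nat \<Rightarrow> (nat \<Rightarrow> int) set" where
  "lattice d = {x. \<forall>k. k \<notin> {1..d} \<longrightarrow> x k = 0}"

text \<open>Jumps of positive rate of the Jackson kernel:
  +e_i at rate lam_i, -e_i at rate mu_i p_i0, e_j - e_i at rate mu_i p_ij.\<close>
definition jumps :: "nat \<Rightarrow> (nat \<Rightarrow> real) \<Rightarrow> (nat \<Rightarrow> real) \<Rightarrow> (nat \<Rightarrow> nat \<Rightarrow> real)
    \<Rightarrow> (nat \<Rightarrow> int) set" where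
  "jumps d lam mu P =
     {unitv i | i. i \<in> {1..d} \<and> lam i > 0}
   \<union> {(\<lambda>k. - unitv i k) | i. i \<in> {1..d} \<and> mu i * (1 - (\<Sum>j=1..d. P i j)) > 0}
   \<union> {(\<lambda>k. unitv j k - unitv i k) | i j. i \<in> {1..d} \<and> j \<in> {1..d} \<and> mu i * P i j > 0}"

definition kernel_step :: "nat \<Rightarrow> (nat \<Rightarrow> real) \<Rightarrow> (nat \<Rightarrow> real) \<Rightarrow> (nat \<Rightarrow> nat \<Rightarrow> real)
    \<Rightarrow> ((nat \<Rightarrow> int) \<times> (nat \<Rightarrow> int)) set" where
  "kernel_step d lam mu P =
     {(x, (\<lambda>k. x k + s k)) | x s. x \<in> lattice d \<and> s \<in> jumps d lam mu P}"

text \<open>Hypothesis (A): the jump-rate kernel on Z^d is irreducible.\<close>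
definition kernel_irreducible :: "nat \<Rightarrow> (nat \<Rightarrow> real) \<Rightarrow> (nat \<Rightarrow> real) \<Rightarrow> (nat \<Rightarrow> nat \<Rightarrow> real)
    \<Rightarrow> bool" where
  "kernel_irreducible d lam mu P \<longleftrightarrow>
     (\<forall>x\<in>lattice d. \<forall>y\<in>lattice d. (x, y) \<in> (kernel_step d lam mu P)\<^sup>*)"

text \<open>First-visit probabilities: probability that the chain with transitions P
  (state 0 absorbing) started at i visits j for the first time at time n
  (for i, j in {1..d}).\<close>
fun first_visit :: "nat \<Rightarrow> (nat \<Rightarrow> nat \<Rightarrow> real) \<Rightarrow> nat \<Rightarrow> nat \<Rightarrow> nat \<Rightarrow> real" where
  "first_visit d P 0 i j = (if i = j then 1 else 0)"
| "first_visit d P (Suc n) i j =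
     (if i = j then 0 else (\<Sum>k=1..d. P i k * first_visit d P n k j))"

text \<open>Q_ij: probability that the chain started at i ever visits j (time 0 included).\<close>
definition visit_prob :: "nat \<Rightarrow> (nat \<Rightarrow> nat \<Rightarrow> real) \<Rightarrow> nat \<Rightarrow> nat \<Rightarrow> real" where
  "visit_prob d P i j = (\<Sum>n. first_visit d P n i j)"

text \<open>Component j of the vector arrow-gamma_i: log(1 + Q_ji gamma_i).\<close>
definition gamma_vec :: "nat \<Rightarrow> (nat \<Rightarrow> nat \<Rightarrow> real) \<Rightarrow> (nat \<Rightarrow> real) \<Rightarrow> nat \<Rightarrow> nat \<Rightarrow> real" where
  "gamma_vec d P \<gamma> i j = ln (1 + visit_prob d P j i * \<gamma> i)"

definition nonneg_vec :: "nat \<Rightarrow> (nat \<Rightarrow> real) set" where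
  "nonneg_vec d = {v. (\<forall>k. k \<notin> {1..d} \<longrightarrow> v k = 0) \<and> (\<forall>k\<in>{1..d}. v k \<ge> 0)}"

definition Gamma_set :: "nat \<Rightarrow> (nat \<Rightarrow> nat \<Rightarrow> real) \<Rightarrow> (nat \<Rightarrow> real) set" where
  "Gamma_set d P = {\<gamma> \<in> nonneg_vec d.
     \<forall>i\<in>{1..d}. \<forall>v\<in>nonneg_vec d. (\<exists>k\<in>{1..d}. v k \<noteq> 0) \<and> v i = 0 \<longrightarrow>
       (\<Sum>j=1..d. gamma_vec d P \<gamma> i j * v j)
         < Max ((\<lambda>l. \<Sum>j=1..d. gamma_vec d P \<gamma> l j * v j) ` {1..d})}"

definition Sigma_fun :: "nat \<Rightarrow> real \<Rightarrow> (nat \<Rightarrow> real) \<Rightarrow> real" where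
  "Sigma_fun d q \<gamma> = (\<Sum>j=1..d.
     (Max ((\<lambda>i. ln (1 + q * \<gamma> i)) ` {1..d}) - ln (1 + q * \<gamma> j))
     / (ln (1 + \<gamma> j) - ln (1 + q * \<gamma> j)))"

definition min_gap :: "nat \<Rightarrow> (nat \<Rightarrow> real) \<Rightarrow> (nat \<Rightarrow> real) \<Rightarrow> real" where
  "min_gap d mu nu = Min ((\<lambda>i. (sqrt (mu i) - sqrt (nu i))\<^sup>2) ` {1..d})"

definition a_end :: "(nat \<Rightarrow> real) \<Rightarrow> (nat \<Rightarrow> real) \<Rightarrow> real \<Rightarrow> nat \<Rightarrow> real" where
  "a_end mu nu m i = (mu i - nu i - m - sqrt ((mu i + nu i - m)\<^sup>2 - 4 * nu i * mu i)) / (2 * nu i)"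

definition b_end :: "(nat \<Rightarrow> real) \<Rightarrow> (nat \<Rightarrow> real) \<Rightarrow> real \<Rightarrow> nat \<Rightarrow> real" where
  "b_end mu nu m i = (mu i - nu i - m + sqrt ((mu i + nu i - m)\<^sup>2 - 4 * nu i * mu i)) / (2 * nu i)"

definition gamma_hat :: "nat \<Rightarrow> (nat \<Rightarrow> real) \<Rightarrow> (nat \<Rightarrow> real) \<Rightarrow> nat \<Rightarrow> real" where
  "gamma_hat d mu nu i =
     min (b_end mu nu (min_gap d mu nu) i) (Max (a_end mu nu (min_gap d mu nu) ` {1..d}))"

end

theory Submission
  imports Defs
begin

lemma gap_bound:
  fixes x y t :: real
  assumes "0 \<le> t" "0 < y" "0 < x"
  shows "t * (x / (1 + t) - y) \<le> (sqrt x - sqrt y)\<^sup>2"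
proof -
  define s where "s = sqrt x"
  define r where "r = sqrt y"
  have xs: "x = s^2" and yr: "y = r^2" using assms by (auto simp: s_def r_def less_imp_le)
  have s0: "s \<ge> 0" and r0: "r \<ge> 0" using assms by (auto simp: s_def r_def)
  have "(sqrt x - sqrt y)\<^sup>2 - t * (x / (1 + t) - y) = (s - r - t*r)^2 / (1+t)"
    using assms s0 r0 unfolding xs yr s_def[symmetric] r_def[symmetric]
    by (simp add: divide_simps power2_eq_square) (simp add: algebra_simps)
  moreover have "(s - r - t*r)^2 / (1+t) \<ge> 0" using assms by simp
  ultimately show ?thesis by linarith
qed

lemma lip_bound:
  fixes x y s t :: real
  assumes "0 \<le> t" "0 \<le> s" "0 \<le> y" "0 \<le> x"
  shows "t * (x / (1 + t) - y) \<ge> s * (x / (1 + s) - y) - (x + y) * \<bar>t - s\<bar>"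
proof -
  have e: "t * (x / (1 + t) - y) - s * (x / (1 + s) - y) = x * ((t - s) / ((1+t)*(1+s))) - y * (t - s)"
    using assms by (simp add: divide_simps) (simp add: algebra_simps)
  have "\<bar>(t - s) / ((1+t)*(1+s))\<bar> \<le> \<bar>t - s\<bar>"
  proof -
    have "(1+t)*(1+s) \<ge> 1" using assms by (simp add: algebra_simps)
    then show ?thesis by (simp add: abs_div divide_le_eq mult_le_cancel_left1)
  qed
  hence "x * ((t - s) / ((1+t)*(1+s))) \<ge> - x * \<bar>t - s\<bar>"
    using assms by (smt (verit) abs_le_iff mult_left_mono mult_minus_left mult_minus_right)
  moreover have "y * (t - s) \<le> y * \<bar>t - s\<bar>" using assms by (simp add: mult_left_mono)
  ultimately show ?thesis using e by (simp add: algebra_simps)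
qed

lemma roots:
  fixes x y l :: real
  assumes y: "0 < y" and yx: "y < x" and l: "0 < l" and lg: "l \<le> (sqrt x - sqrt y)\<^sup>2"
  defines "D \<equiv> (x + y - l)\<^sup>2 - 4 * y * x"
  defines "a \<equiv> (x - y - l - sqrt D) / (2 * y)" and "b \<equiv> (x - y - l + sqrt D) / (2 * y)"
  shows "0 < a" "a \<le> b" "\<And>t. 0 \<le> t \<Longrightarrow> (l \<le> t * (x / (1 + t) - y)) \<longleftrightarrow> (a \<le> t \<and> t \<le> b)"
proof -
  define s where "s = sqrt x"
  define r where "r = sqrt y"
  have xs: "x = s^2" and yr: "y = r^2" using assms by (auto simp: s_def r_def)
  have r0: "r > 0" using y by (simp add: r_def)
  have rs: "r < s" using yx by (simp add: r_def s_def)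
  have lg': "l \<le> (s - r)^2" using lg by (simp add: s_def r_def)
  have h1: "x + y - l \<ge> 2*s*r" using lg' unfolding xs yr by (simp add: power2_eq_square algebra_simps)
  have "2*s*r \<ge> 0" using r0 rs by simp
  hence "(x + y - l)^2 \<ge> (2*s*r)^2" using h1 by (simp add: power_mono)
  hence D0: "D \<ge> 0" unfolding D_def xs yr by (simp add: power2_eq_square algebra_simps)
  define w where "w = sqrt D"
  have w0: "w \<ge> 0" and w2: "w^2 = D" using D0 by (auto simp: w_def)
  have pos: "x - y - l > 0"
  proof -
    have "x - y - l \<ge> 2*r*(s-r)" using lg' unfolding xs yr by (simp add: power2_eq_square algebra_simps)
    moreover have "2*r*(s-r) > 0" using r0 rs by simp
    ultimately show ?thesis by linarith
  qed
  have "D < (x - y - l)^2" unfolding D_def using y l by (simp add: power2_eq_square algebra_simps)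
  hence "w^2 < (x-y-l)^2" using w2 by simp
  hence wl: "w < x - y - l" using pos by (meson less_imp_le power2_less_imp_less)
  show "0 < a" unfolding a_def w_def[symmetric] using wl y by simp
  show ab: "a \<le> b" unfolding a_def b_def w_def[symmetric] using w0 y by (simp add: divide_right_mono)
  fix t :: real assume t: "0 \<le> t"
  have apb: "a + b = (x-y-l)/y" unfolding a_def b_def using y by (simp add: field_simps)
  have "a * b = ((x-y-l)^2 - w^2)/(4*y^2)" unfolding a_def b_def w_def[symmetric] using y
    by (simp add: field_simps power2_eq_square)
  also have "\<dots> = l / y" unfolding w2 D_def using y by (simp add: field_simps power2_eq_square)
  finally have atb: "a * b = l / y" .
  have "(t - a) * (t - b) = t^2 - (a+b)*t + a*b" by (simp add: algebra_simps power2_eq_square)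
  also have "\<dots> = (y*t^2 - (x-y-l)*t + l) / y" unfolding apb atb using y by (simp add: field_simps)
  finally have key: "y*t^2 - (x-y-l)*t + l = y * ((t - a) * (t - b))" using y by simp
  have "(l \<le> t * (x / (1 + t) - y)) \<longleftrightarrow> y*t^2 - (x-y-l)*t + l \<le> 0"
    using t by (simp add: field_simps power2_eq_square)
  also have "y*t^2 - (x-y-l)*t + l = y * ((t - a) * (t - b))" by (rule key)
  also have "y * ((t - a) * (t - b)) \<le> 0 \<longleftrightarrow> (t - a) * (t - b) \<le> 0" using y
    by (simp add: mult_le_0_iff)
  also have "\<dots> \<longleftrightarrow> a \<le> t \<and> t \<le> b" using ab by (auto simp: mult_le_0_iff)
  finally show "(l \<le> t * (x / (1 + t) - y)) \<longleftrightarrow> (a \<le> t \<and> t \<le> b)" .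
qed

lemma fv_formula:
  assumes d: "d \<ge> 2" and P_diag: "\<forall>i\<in>{1..d}. P i i = 0"
    and P_const: "\<forall>i\<in>{1..d}. \<forall>j\<in>{1..d}. i \<noteq> j \<longrightarrow> P i j = p"
    and i: "i \<in> {1..d}"
  shows "\<forall>j\<in>{1..d}. j \<noteq> i \<longrightarrow> first_visit d P (Suc n) j i = p * ((real d - 2) * p) ^ n"
proof (induction n)
  case 0
  show ?case
  proof (intro ballI impI)
    fix j assume j: "j \<in> {1..d}" "j \<noteq> i"
    have "first_visit d P (Suc 0) j i = (\<Sum>k=1..d. P j k * (if k = i then 1 else 0))"
      using j by simp
    also have "\<dots> = (\<Sum>k=1..d. if k = i then P j k else 0)"
      by (rule sum.cong) auto
    also have "\<dots> = P j i" using i by simp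
    finally show "first_visit d P (Suc 0) j i = p * ((real d - 2) * p) ^ 0" using P_const i j by simp
  qed
next
  case (Suc n)
  show ?case
  proof (intro ballI impI)
    fix j assume j: "j \<in> {1..d}" "j \<noteq> i"
    have "first_visit d P (Suc (Suc n)) j i = (\<Sum>k=1..d. P j k * first_visit d P (Suc n) k i)"
      using j by simp
    also have "\<dots> = (\<Sum>k\<in>{1..d}-{i,j}. p * (p * ((real d - 2) * p) ^ n))"
    proof (rule sum.mono_neutral_cong_right)
      show "\<forall>k\<in>{1..d} - ({1..d} - {i, j}). P j k * first_visit d P (Suc n) k i = 0"
        using P_diag j by auto
      show "\<And>k. k \<in> {1..d} - {i, j} \<Longrightarrow> P j k * first_visit d P (Suc n) k i = p * (p * ((real d - 2) * p) ^ n)"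
        using Suc P_const j by auto
    qed auto
    also have "\<dots> = real (card ({1..d}-{i,j})) * (p * (p * ((real d - 2) * p) ^ n))" by simp
    also have "card ({1..d}-{i,j}) = d - 2" using i j by (simp add: card_Diff_subset)
    finally show "first_visit d P (Suc (Suc n)) j i = p * ((real d - 2) * p) ^ Suc n"
      using d by (simp add: of_nat_diff algebra_simps)
  qed
qed

lemma visit_prob_formula:
  assumes d: "d \<ge> 2" and P_diag: "\<forall>i\<in>{1..d}. P i i = 0"
    and P_const: "\<forall>i\<in>{1..d}. \<forall>j\<in>{1..d}. i \<noteq> j \<longrightarrow> P i j = p"
    and p0: "0 \<le> p" and r1: "(real d - 2) * p < 1"
    and i: "i \<in> {1..d}" and j: "j \<in> {1..d}"
  shows "visit_prob d P j i = (if j = i then 1 else p / (1 - (real d - 2) * p))"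
proof (cases "j = i")
  case True
  have "(\<lambda>n. first_visit d P n i i) = (\<lambda>n. if n = 0 then 1 else 0)"
    by (rule ext, case_tac n) auto
  moreover have "(\<lambda>n. if n = 0 then 1 else 0 :: real) sums 1" using sums_single[of 0 "\<lambda>_. 1::real"] by simp
  ultimately show ?thesis using True by (simp add: visit_prob_def sums_unique[symmetric])
next
  case False
  define r where "r = (real d - 2) * p"
  have r0: "0 \<le> r" using d p0 by (simp add: r_def)
  have "(\<lambda>n. r ^ n) sums (1 / (1 - r))" using r0 r1 by (intro geometric_sums) (simp add: r_def)
  hence "(\<lambda>n. p * r ^ n) sums (p * (1 / (1 - r)))" by (rule sums_mult)
  moreover have "(\<lambda>n. first_visit d P (Suc n) j i) = (\<lambda>n. p * r ^ n)"
    using fv_formula[OF d P_diag P_const i] j False by (auto simp: r_def)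
  ultimately have "(\<lambda>n. first_visit d P (Suc n) j i) sums (p / (1 - r))" by simp
  hence "(\<lambda>n. first_visit d P n j i) sums (p / (1 - r) + first_visit d P 0 j i)"
    using sums_Suc_iff[of "\<lambda>n. first_visit d P n j i"] by blast
  hence "(\<lambda>n. first_visit d P n j i) sums (p / (1 - r))" using False by simp
  then show ?thesis using False by (simp add: visit_prob_def r_def sums_unique[symmetric])
qed

lemma tendsto_Max_fin:
  assumes "finite A" "A \<noteq> {}" "\<forall>i\<in>A. ((\<lambda>x. f x i) \<longlongrightarrow> g i) F"
  shows "((\<lambda>x. Max ((\<lambda>i. f x i) ` A)) \<longlongrightarrow> (Max (g ` A) :: real)) F"
  using assms
proof (induction A rule: finite_ne_induct)
  case (singleton x)
  then show ?case by simp
next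
  case (insert a A)
  have "((\<lambda>x. max (f x a) (Max ((\<lambda>i. f x i) ` A))) \<longlongrightarrow> max (g a) (Max (g ` A))) F"
    using insert by (intro tendsto_max) auto
  then show ?case using insert by (simp add: Max_insert)
qed

lemma L_mono: "0 \<le> (q::real) \<Longrightarrow> 0 \<le> x \<Longrightarrow> x \<le> y \<Longrightarrow> ln (1 + q*x) \<le> ln (1 + q*y)"
proof -
  assume a: "0 \<le> q" "0 \<le> x" "x \<le> y"
  have "q*x \<le> q*y" "0 \<le> q*x" "0 \<le> q*y" using a by (auto simp: mult_left_mono)
  then show ?thesis by (subst ln_le_cancel_iff) auto
qed

lemma L_strict: "0 < (q::real) \<Longrightarrow> 0 \<le> x \<Longrightarrow> x < y \<Longrightarrow> ln (1 + q*x) < ln (1 + q*y)"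
proof -
  assume a: "0 < q" "0 \<le> x" "x < y"
  have "q*x < q*y" "0 \<le> q*x" "0 \<le> q*y" using a by auto
  then show ?thesis by (subst ln_less_cancel_iff) auto
qed

lemma L_nonneg: "0 \<le> (q::real) \<Longrightarrow> 0 \<le> x \<Longrightarrow> 0 \<le> ln (1 + q*x)"
  by simp

lemma c_pos: "0 \<le> (q::real) \<Longrightarrow> q < 1 \<Longrightarrow> 0 < x \<Longrightarrow> 0 < ln (1 + x) - ln (1 + q*x)"
proof -
  assume a: "0 \<le> q" "q < 1" "0 < x"
  have "q * x < x" "0 \<le> q*x" using a by (auto simp: mult_less_cancel_right1)
  hence "ln (1 + q*x) < ln (1 + x)" using a by (subst ln_less_cancel_iff) linarith+
  then show ?thesis by simp
qed

lemma c_mono: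
  assumes "0 \<le> (q::real)" "q < 1" "0 \<le> x" "x \<le> y"
  shows "ln (1 + x) - ln (1 + q*x) \<le> ln (1 + y) - ln (1 + q*y)"
proof -
  have "(1+x)*(1+q*y) \<le> (1+y)*(1+q*x)"
  proof -
    have "(1+y)*(1+q*x) - (1+x)*(1+q*y) = (1-q)*(y-x)" by (simp add: algebra_simps)
    moreover have "(1-q)*(y-x) \<ge> 0" using assms by simp
    ultimately show ?thesis by linarith
  qed
  moreover have "0 \<le> q*x" "0 \<le> q*y" using assms by auto
  moreover have px: "0 < 1+q*x" and py: "0 < 1+q*y" using calculation(2,3) by linarith+
  ultimately have fr: "(1+x)/(1+q*x) \<le> (1+y)/(1+q*y)"
    by (simp add: divide_simps)
  have "0 < (1+x)/(1+q*x)" "0 < (1+y)/(1+q*y)" using px py assms by auto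
  hence "ln ((1+x)/(1+q*x)) \<le> ln ((1+y)/(1+q*y))" using fr by (subst ln_le_cancel_iff) auto
  then show ?thesis using assms px py by (simp add: ln_div)
qed

lemma term_le:
  assumes q: "0 \<le> (q::real)" "q < 1" and x: "0 < x" "x \<le> y" and M: "ln (1 + q*y) \<le> Mv"
  shows "(Mv - ln (1 + q*y)) / (ln (1 + y) - ln (1 + q*y)) \<le> (Mv - ln (1 + q*x)) / (ln (1 + x) - ln (1 + q*x))"
proof -
  have cx: "0 < ln (1 + x) - ln (1 + q*x)" using c_pos q x by simp
  have cxy: "ln (1 + x) - ln (1 + q*x) \<le> ln (1 + y) - ln (1 + q*y)" using c_mono q x by simp
  have Ly: "ln (1 + q*x) \<le> ln (1 + q*y)" using L_mono q x by simp
  have "(Mv - ln (1 + q*y)) / (ln (1 + y) - ln (1 + q*y)) \<le> (Mv - ln (1 + q*y)) / (ln (1 + x) - ln (1 + q*x))"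
    using M cx cxy by (intro divide_left_mono) auto
  also have "\<dots> \<le> (Mv - ln (1 + q*x)) / (ln (1 + x) - ln (1 + q*x))"
    using cx Ly by (intro divide_right_mono) auto
  finally show ?thesis .
qed

lemma term_less:
  assumes q: "0 < (q::real)" "q < 1" and x: "0 < x" "x < y" and M: "ln (1 + q*y) \<le> Mv"
  shows "(Mv - ln (1 + q*y)) / (ln (1 + y) - ln (1 + q*y)) < (Mv - ln (1 + q*x)) / (ln (1 + x) - ln (1 + q*x))"
proof -
  have cx: "0 < ln (1 + x) - ln (1 + q*x)" using c_pos q x by simp
  have cxy: "ln (1 + x) - ln (1 + q*x) \<le> ln (1 + y) - ln (1 + q*y)" using c_mono q x by simp
  have Ly: "ln (1 + q*x) < ln (1 + q*y)" using L_strict q x by simp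
  have "(Mv - ln (1 + q*y)) / (ln (1 + y) - ln (1 + q*y)) \<le> (Mv - ln (1 + q*y)) / (ln (1 + x) - ln (1 + q*x))"
    using M cx cxy by (intro divide_left_mono) auto
  also have "\<dots> < (Mv - ln (1 + q*x)) / (ln (1 + x) - ln (1 + q*x))"
    using cx Ly by (intro divide_strict_right_mono) auto
  finally show ?thesis .
qed

lemma sigma_min:
  assumes q: "0 \<le> (q::real)" "q < 1" and d: "d \<ge> 1"
    and ab: "\<forall>j\<in>{1..d}. 0 < a j \<and> a j \<le> g j \<and> g j \<le> b j"
  shows "Sigma_fun d q (\<lambda>j. min (b j) (Max (a ` {1..d}))) \<le> Sigma_fun d q g"
proof -
  define ah where "ah = Max (a ` {1..d})"
  define h where "h = (\<lambda>j. min (b j) ah)"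
  have ne: "{1..d} \<noteq> {}" using d by simp
  have "ah \<in> a ` {1..d}" unfolding ah_def using ne by (intro Max_in) auto
  then obtain i0 where i0: "i0 \<in> {1..d}" "a i0 = ah" by auto
  have a_le: "\<And>j. j \<in> {1..d} \<Longrightarrow> a j \<le> ah" by (simp add: ah_def)
  have h_pos: "\<And>j. j \<in> {1..d} \<Longrightarrow> a j \<le> h j"
  proof -
    fix j assume j: "j \<in> {1..d}"
    have "a j \<le> g j" "g j \<le> b j" using ab j by auto
    then show "a j \<le> h j" using a_le[OF j] by (auto simp: h_def)
  qed
  have h_gt: "\<And>j. j \<in> {1..d} \<Longrightarrow> 0 < h j"
  proof -
    fix j assume j: "j \<in> {1..d}"
    have "0 < a j" using ab j by auto
    then show "0 < h j" using h_pos[OF j] by linarith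
  qed
  have h_le: "\<And>j. j \<in> {1..d} \<Longrightarrow> h j \<le> ah" by (simp add: h_def)
  have h_i0: "h i0 = ah"
  proof -
    have "a i0 \<le> b i0" using ab i0 by force
    then show ?thesis using i0 by (auto simp: h_def)
  qed
  define Mg where "Mg = Max ((\<lambda>i. ln (1 + q * g i)) ` {1..d})"
  define Mh where "Mh = Max ((\<lambda>i. ln (1 + q * h i)) ` {1..d})"
  have Mh_eq: "Mh = ln (1 + q * ah)"
  proof (rule antisym)
    show "Mh \<le> ln (1 + q * ah)" unfolding Mh_def
    proof (rule Max.boundedI)
      show "(\<lambda>i. ln (1 + q * h i)) ` {1..d} \<noteq> {}" using ne by simp
      fix z assume "z \<in> (\<lambda>i. ln (1 + q * h i)) ` {1..d}"
      then obtain j where j: "j \<in> {1..d}" "z = ln (1 + q * h j)" by auto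
      show "z \<le> ln (1 + q * ah)" unfolding j(2)
        by (rule L_mono[OF q(1) less_imp_le[OF h_gt[OF j(1)]] h_le[OF j(1)]])
    qed simp
    show "ln (1 + q * ah) \<le> Mh" unfolding Mh_def using i0 h_i0
      by (intro Max_ge_iff[THEN iffD2]) (auto intro!: bexI[of _ i0])
  qed
  have ai0: "0 < a i0" "a i0 \<le> g i0" using ab i0 by auto
  have Mg_ge: "ln (1 + q * ah) \<le> Mg" unfolding Mg_def using i0 ai0 q
    by (intro Max_ge_iff[THEN iffD2]) (auto intro!: bexI[of _ i0] L_mono)
  have Mg_ge2: "\<And>j. j \<in> {1..d} \<Longrightarrow> ln (1 + q * g j) \<le> Mg" unfolding Mg_def by simp
  have "Sigma_fun d q h = (\<Sum>j=1..d. (Mh - ln (1 + q * h j)) / (ln (1 + h j) - ln (1 + q * h j)))"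
    by (simp add: Sigma_fun_def Mh_def)
  also have "\<dots> \<le> (\<Sum>j=1..d. (Mg - ln (1 + q * g j)) / (ln (1 + g j) - ln (1 + q * g j)))"
  proof (rule sum_mono)
    fix j assume j: "j \<in> {1..d}"
    have gpos: "0 < g j" using ab j by force
    have hpos: "0 < h j" using ab j h_pos[OF j] by force
    have cg: "0 < ln (1 + g j) - ln (1 + q * g j)" using c_pos q gpos by simp
    show "(Mh - ln (1 + q * h j)) / (ln (1 + h j) - ln (1 + q * h j)) \<le> (Mg - ln (1 + q * g j)) / (ln (1 + g j) - ln (1 + q * g j))"
    proof (cases "g j \<le> h j")
      case True
      have "(Mh - ln (1 + q * h j)) / (ln (1 + h j) - ln (1 + q * h j)) \<le> (Mh - ln (1 + q * g j)) / (ln (1 + g j) - ln (1 + q * g j))"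
        using term_le[OF q gpos True] Mh_eq L_mono[OF q(1) _ h_le[OF j]] hpos by simp
      also have "\<dots> \<le> (Mg - ln (1 + q * g j)) / (ln (1 + g j) - ln (1 + q * g j))"
        using Mh_eq Mg_ge cg by (intro divide_right_mono) auto
      finally show ?thesis .
    next
      case False
      hence "h j = ah" using ab j by (auto simp: h_def min_def split: if_splits)
      hence "Mh - ln (1 + q * h j) = 0" using Mh_eq by simp
      moreover have "0 \<le> (Mg - ln (1 + q * g j)) / (ln (1 + g j) - ln (1 + q * g j))"
        using Mg_ge2[OF j] cg by simp
      ultimately show ?thesis by simp
    qed
  qed
  also have "\<dots> = Sigma_fun d q g" by (simp add: Sigma_fun_def Mg_def)
  finally show ?thesis by (simp add: h_def ah_def)
qed

lemma gamma_char:
  fixes d :: nat and P :: "nat \<Rightarrow> nat \<Rightarrow> real" and q :: real and \<gamma> :: "nat \<Rightarrow> real"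
  assumes d: "d \<ge> 2" and vp: "\<forall>i\<in>{1..d}. \<forall>j\<in>{1..d}. visit_prob d P j i = (if j = i then 1 else q)"
    and q: "0 \<le> q" "q < 1" and g: "\<gamma> \<in> nonneg_vec d"
  shows "\<gamma> \<in> Gamma_set d P \<longleftrightarrow> (\<forall>j\<in>{1..d}. \<gamma> j > 0) \<and> Sigma_fun d q \<gamma> < 1"
proof -
  have g0: "\<And>k. k \<in> {1..d} \<Longrightarrow> 0 \<le> \<gamma> k" using g by (simp add: nonneg_vec_def)
  define B where "B = (\<lambda>i. ln (1 + q * \<gamma> i))"
  define c where "c = (\<lambda>i. ln (1 + \<gamma> i) - ln (1 + q * \<gamma> i))"
  define M where "M = Max (B ` {1..d})"
  have ne: "{1..d} \<noteq> {}" using d by simp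
  have key: "\<And>i v. i \<in> {1..d} \<Longrightarrow> (\<Sum>j=1..d. gamma_vec d P \<gamma> i j * v j) = B i * (\<Sum>j=1..d. v j) + c i * v i"
  proof -
    fix i :: nat and v :: "nat \<Rightarrow> real" assume i: "i \<in> {1..d}"
    have "(\<Sum>j=1..d. gamma_vec d P \<gamma> i j * v j) = (\<Sum>j=1..d. B i * v j + (if j = i then c i * v i else 0))"
    proof (rule sum.cong)
      fix j assume j: "j \<in> {1..d}"
      have "visit_prob d P j i = (if j = i then 1 else q)" using vp i j by blast
      then show "gamma_vec d P \<gamma> i j * v j = B i * v j + (if j = i then c i * v i else 0)"
        by (auto simp: gamma_vec_def B_def c_def algebra_simps)
    qed simp
    also have "\<dots> = B i * (\<Sum>j=1..d. v j) + c i * v i" using i by (simp add: sum.distrib sum_distrib_left)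
    finally show "(\<Sum>j=1..d. gamma_vec d P \<gamma> i j * v j) = B i * (\<Sum>j=1..d. v j) + c i * v i" .
  qed
  have cond_iff: "\<And>i v. i \<in> {1..d} \<Longrightarrow>
      ((\<Sum>j=1..d. gamma_vec d P \<gamma> i j * v j) < Max ((\<lambda>l. \<Sum>j=1..d. gamma_vec d P \<gamma> l j * v j) ` {1..d}))
      \<longleftrightarrow> (\<exists>l\<in>{1..d}. B i * (\<Sum>j=1..d. v j) + c i * v i < B l * (\<Sum>j=1..d. v j) + c l * v l)"
  proof -
    fix i :: nat and v :: "nat \<Rightarrow> real" assume i: "i \<in> {1..d}"
    have "(\<lambda>l. \<Sum>j=1..d. gamma_vec d P \<gamma> l j * v j) ` {1..d} = (\<lambda>l. B l * (\<Sum>j=1..d. v j) + c l * v l) ` {1..d}"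
    proof (rule image_cong[OF refl])
      fix l :: nat assume "l \<in> {1..d}"
      then show "(\<Sum>j=1..d. gamma_vec d P \<gamma> l j * v j) = B l * (\<Sum>j=1..d. v j) + c l * v l" by (rule key)
    qed
    moreover have "(\<Sum>j=1..d. gamma_vec d P \<gamma> i j * v j) = B i * (\<Sum>j=1..d. v j) + c i * v i" using i by (rule key)
    ultimately show "?thesis i v" using ne by (simp add: Max_gr_iff)
  qed
  have Sig: "Sigma_fun d q \<gamma> = (\<Sum>j=1..d. (M - B j) / c j)" by (simp add: Sigma_fun_def M_def B_def c_def)
  have B0: "\<And>j. j \<in> {1..d} \<Longrightarrow> 0 \<le> B j" using g0 q by (simp add: B_def)
  have BM: "\<And>j. j \<in> {1..d} \<Longrightarrow> B j \<le> M" by (simp add: M_def)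
  have "M \<in> B ` {1..d}" unfolding M_def using ne by (intro Max_in) auto
  then obtain i0 where i0: "i0 \<in> {1..d}" "B i0 = M" by auto
  show ?thesis
  proof
    assume G: "\<gamma> \<in> Gamma_set d P"
    have cond: "\<And>i v. i \<in> {1..d} \<Longrightarrow> v \<in> nonneg_vec d \<Longrightarrow> (\<exists>k\<in>{1..d}. v k \<noteq> 0) \<Longrightarrow> v i = 0 \<Longrightarrow>
       (\<exists>l\<in>{1..d}. B i * (\<Sum>j=1..d. v j) + c i * v i < B l * (\<Sum>j=1..d. v j) + c l * v l)"
      using G cond_iff unfolding Gamma_set_def by blast
    have pos: "\<forall>j\<in>{1..d}. \<gamma> j > 0"
    proof (rule ccontr)
      assume "\<not> (\<forall>j\<in>{1..d}. \<gamma> j > 0)"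
      then obtain j where j: "j \<in> {1..d}" "\<gamma> j = 0" using g0 by force
      define X where "X = {1..d} - {j}"
      have Xne: "X \<noteq> {}"
      proof -
        have "(if j = 1 then 2 else 1) \<in> X" using d j by (auto simp: X_def)
        then show ?thesis by blast
      qed
      have "Max (B ` X) \<in> B ` X" using Xne by (intro Max_in) (auto simp: X_def)
      then obtain i where i: "i \<in> X" "B i = Max (B ` X)" by auto
      have iX: "\<And>l. l \<in> X \<Longrightarrow> B l \<le> B i" using i by (simp add: X_def)
      define v :: "nat \<Rightarrow> real" where "v = (\<lambda>k. if k = j then 1 else 0)"
      have v: "v \<in> nonneg_vec d" using j by (auto simp: v_def nonneg_vec_def)
      have S: "(\<Sum>k=1..d. v k) = 1" using j by (simp add: v_def)
      have id: "i \<in> {1..d}" "i \<noteq> j" using i by (auto simp: X_def)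
      obtain l where l: "l \<in> {1..d}" "B i * (\<Sum>k=1..d. v k) + c i * v i < B l * (\<Sum>k=1..d. v k) + c l * v l"
        using cond[OF id(1) v] j id by (force simp: v_def)
      show False
      proof (cases "l = j")
        case True
        then show False using l S id B0[OF id(1)] j by (simp add: v_def c_def B_def)
      next
        case False
        then show False using l S id iX[of l] by (simp add: v_def X_def)
      qed
    qed
    have cpos: "\<And>j. j \<in> {1..d} \<Longrightarrow> 0 < c j"
    proof -
      fix j assume "j \<in> {1..d}"
      hence "0 < \<gamma> j" using pos by auto
      then show "0 < c j" unfolding c_def by (rule c_pos[OF q])
    qed
    have "Sigma_fun d q \<gamma> < 1"
    proof (rule ccontr)
      assume "\<not> Sigma_fun d q \<gamma> < 1"
      hence S1: "(\<Sum>j=1..d. (M - B j) / c j) \<ge> 1" using Sig by simp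
      define v where "v = (\<lambda>l. if l \<in> {1..d} then (M - B l) / c l else 0)"
      have v: "v \<in> nonneg_vec d"
        unfolding nonneg_vec_def v_def
      proof (intro CollectI conjI allI ballI impI)
        fix k assume k: "k \<in> {1..d}"
        show "0 \<le> (if k \<in> {1..d} then (M - B k) / c k else 0)"
          using BM[OF k] cpos[OF k] k by simp
      qed auto
      have vS: "(\<Sum>k=1..d. v k) = (\<Sum>j=1..d. (M - B j) / c j)" by (simp add: v_def)
      have vi0: "v i0 = 0" using i0 by (simp add: v_def)
      have nz: "\<exists>k\<in>{1..d}. v k \<noteq> 0"
      proof (rule ccontr)
        assume "\<not> (\<exists>k\<in>{1..d}. v k \<noteq> 0)"
        hence "(\<Sum>k=1..d. v k) = 0" by simp
        then show False using S1 vS by simp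
      qed
      obtain l where l: "l \<in> {1..d}" "B i0 * (\<Sum>k=1..d. v k) + c i0 * v i0 < B l * (\<Sum>k=1..d. v k) + c l * v l"
        using cond[OF i0(1) v nz vi0] by blast
      define S where "S = (\<Sum>k=1..d. v k)"
      have S1': "S \<ge> 1" using S1 vS by (simp add: S_def)
      have "c l * v l = M - B l" using cpos[OF l(1)] l(1) by (simp add: v_def)
      hence "M * S < B l * S + (M - B l)" using l vi0 i0 by (simp add: S_def)
      moreover have "(M - B l) * (S - 1) \<ge> 0" using BM[OF l(1)] S1' by simp
      ultimately show False by (simp add: algebra_simps)
    qed
    then show "(\<forall>j\<in>{1..d}. \<gamma> j > 0) \<and> Sigma_fun d q \<gamma> < 1" using pos by simp
  next
    assume A: "(\<forall>j\<in>{1..d}. \<gamma> j > 0) \<and> Sigma_fun d q \<gamma> < 1"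
    have cpos: "\<And>j. j \<in> {1..d} \<Longrightarrow> 0 < c j"
    proof -
      fix j assume "j \<in> {1..d}"
      hence "0 < \<gamma> j" using A by auto
      then show "0 < c j" unfolding c_def by (rule c_pos[OF q])
    qed
    have "\<forall>i\<in>{1..d}. \<forall>v\<in>nonneg_vec d. (\<exists>k\<in>{1..d}. v k \<noteq> 0) \<and> v i = 0 \<longrightarrow>
       (\<Sum>j=1..d. gamma_vec d P \<gamma> i j * v j) < Max ((\<lambda>l. \<Sum>j=1..d. gamma_vec d P \<gamma> l j * v j) ` {1..d})"
    proof (intro ballI impI)
      fix i v assume i: "i \<in> {1..d}" and v: "v \<in> nonneg_vec d" and nz: "(\<exists>k\<in>{1..d}. v k \<noteq> 0) \<and> v i = 0"
      have v0: "\<And>k. k \<in> {1..d} \<Longrightarrow> 0 \<le> v k" using v by (simp add: nonneg_vec_def)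
      define S where "S = (\<Sum>k=1..d. v k)"
      obtain k where k: "k \<in> {1..d}" "v k \<noteq> 0" using nz by blast
      have Spos: "0 < S" unfolding S_def using k v0 by (intro sum_pos2[of _ k]) (auto simp: less_le)
      show "(\<Sum>j=1..d. gamma_vec d P \<gamma> i j * v j) < Max ((\<lambda>l. \<Sum>j=1..d. gamma_vec d P \<gamma> l j * v j) ` {1..d})"
        unfolding cond_iff[OF i]
      proof (rule ccontr)
        assume "\<not> (\<exists>l\<in>{1..d}. B i * (\<Sum>j=1..d. v j) + c i * v i < B l * (\<Sum>j=1..d. v j) + c l * v l)"
        hence le: "\<And>l. l \<in> {1..d} \<Longrightarrow> B l * S + c l * v l \<le> B i * S" using nz by (force simp: S_def)
        have "\<And>l. l \<in> {1..d} \<Longrightarrow> v l \<le> (M - B l) / c l * S"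
        proof -
          fix l assume l: "l \<in> {1..d}"
          have "B i * S \<le> M * S" using BM[OF i] Spos by (simp add: mult_right_mono)
          hence "c l * v l \<le> (M - B l) * S" using le[OF l] by (simp add: algebra_simps)
          then show "v l \<le> (M - B l) / c l * S" using cpos[OF l]
            by (simp add: divide_simps mult.commute)
        qed
        hence "S \<le> (\<Sum>l=1..d. (M - B l) / c l * S)" unfolding S_def by (intro sum_mono) (auto simp: S_def)
        also have "\<dots> = Sigma_fun d q \<gamma> * S" using Sig by (simp add: sum_distrib_right)
        also have "\<dots> < S" using A Spos by simp
        finally show False by simp
      qed
    qed
    then show "\<gamma> \<in> Gamma_set d P" using g by (simp add: Gamma_set_def)
  qed
qed

lemma sum_unitv: "i \<in> {1..d} \<Longrightarrow> (\<Sum>k=1..d. unitv i k) = 1"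
  by (simp add: unitv_def)

lemma sum_unitv': "Suc 0 \<le> i \<Longrightarrow> i \<le> d \<Longrightarrow> sum (unitv i) {Suc 0..d} = 1"
  by (simp add: unitv_def)

lemma kstep_D:
  assumes "(x, y) \<in> kernel_step d lam mu P"
  obtains s where "s \<in> jumps d lam mu P" "y = (\<lambda>k. x k + s k)"
  using assms unfolding kernel_step_def by blast

lemma lam_exists_pos:
  assumes hypA: "kernel_irreducible d lam mu P" and d: "d \<ge> 1"
  shows "\<exists>k\<in>{1..d}. lam k > 0"
proof (rule ccontr)
  assume no: "\<not> (\<exists>k\<in>{1..d}. lam k > 0)"
  define \<phi> where "\<phi> = (\<lambda>x::nat\<Rightarrow>int. \<Sum>k=1..d. x k)"
  have step: "\<phi> y \<le> \<phi> x" if xy: "(x, y) \<in> kernel_step d lam mu P" for x y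
  proof -
    obtain s where s: "s \<in> jumps d lam mu P" "y = (\<lambda>k. x k + s k)" using kstep_D[OF xy] by blast
    have "\<phi> y = \<phi> x + (\<Sum>k=1..d. s k)" by (simp add: \<phi>_def s(2) sum.distrib)
    moreover have "(\<Sum>k=1..d. s k) \<le> 0"
      using s(1) no unfolding jumps_def
      by (auto simp: sum_negf sum_subtractf sum_unitv sum_unitv')
    ultimately show ?thesis by simp
  qed
  have "\<phi> y \<le> \<phi> x" if "(x, y) \<in> (kernel_step d lam mu P)\<^sup>*" for x y
    using that by (induction rule: rtrancl_induct) (auto dest: step)
  moreover have "(\<lambda>_. 0) \<in> lattice d" "unitv 1 \<in> lattice d" using d by (auto simp: lattice_def unitv_def)
  ultimately have "\<phi> (unitv 1) \<le> \<phi> (\<lambda>_. 0)" using hypA unfolding kernel_irreducible_def by blast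
  moreover have "\<phi> (unitv 1) = 1" using d by (simp add: \<phi>_def sum_unitv')
  ultimately show False by (simp add: \<phi>_def)
qed

lemma lam_pos_P0:
  assumes hypA: "kernel_irreducible d lam mu P" and P0: "\<forall>i\<in>{1..d}. \<forall>j\<in>{1..d}. P i j = 0"
    and j: "j \<in> {1..d}" and lam_nonneg: "\<forall>i\<in>{1..d}. lam i \<ge> 0"
  shows "lam j > 0"
proof (rule ccontr)
  assume "\<not> lam j > 0"
  hence lj: "lam j = 0" using lam_nonneg j by force
  have step: "y j \<le> x j" if xy: "(x, y) \<in> kernel_step d lam mu P" for x y
  proof -
    obtain s where s: "s \<in> jumps d lam mu P" "y = (\<lambda>k. x k + s k)" using kstep_D[OF xy] by blast
    have "s j \<le> 0"
      using s(1) lj P0 unfolding jumps_def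
      by (auto simp: unitv_def)
    then show ?thesis using s(2) by simp
  qed
  have "y j \<le> x j" if "(x, y) \<in> (kernel_step d lam mu P)\<^sup>*" for x y
    using that by (induction rule: rtrancl_induct) (auto dest: step)
  moreover have "(\<lambda>_. 0) \<in> lattice d" "unitv j \<in> lattice d" using j by (auto simp: lattice_def unitv_def)
  ultimately have "unitv j j \<le> 0" using hypA unfolding kernel_irreducible_def by fastforce
  then show False by (simp add: unitv_def)
qed

lemma nu_pos:
  fixes d :: nat and lam nu mu :: "nat \<Rightarrow> real" and P :: "nat \<Rightarrow> nat \<Rightarrow> real" and p :: real
  assumes d: "d \<ge> 2" and lam_nonneg: "\<forall>i\<in>{1..d}. lam i \<ge> 0"
    and P_diag: "\<forall>i\<in>{1..d}. P i i = 0"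
    and P_const: "\<forall>i\<in>{1..d}. \<forall>j\<in>{1..d}. i \<noteq> j \<longrightarrow> P i j = p"
    and p0: "0 \<le> p" and pb: "(real d - 1) * p < 1"
    and hypA: "kernel_irreducible d lam mu P"
    and traffic: "\<forall>j\<in>{1..d}. nu j = lam j + (\<Sum>i=1..d. nu i * P i j)"
  shows "\<forall>j\<in>{1..d}. nu j > 0"
proof -
  define T where "T = (\<Sum>i=1..d. nu i)"
  define \<Lambda> where "\<Lambda> = (\<Sum>i=1..d. lam i)"
  have tr: "nu j = lam j + p * (T - nu j)" if j: "j \<in> {1..d}" for j
  proof -
    have "(\<Sum>i=1..d. nu i * P i j) = (\<Sum>i=1..d. p * nu i - (if i = j then p * nu i else 0))"
    proof (rule sum.cong)
      fix i assume i: "i \<in> {1..d}"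
      show "nu i * P i j = p * nu i - (if i = j then p * nu i else 0)"
        using P_diag P_const i j by auto
    qed simp
    also have "\<dots> = p * T - p * nu j" using j by (simp add: sum_subtractf sum_distrib_left T_def)
    finally show ?thesis using traffic j by (simp add: algebra_simps)
  qed
  have "(\<Sum>j=1..d. nu j) = (\<Sum>j=1..d. lam j + p * (T - nu j))"
    by (rule sum.cong[OF refl], rule tr)
  hence "T = (\<Sum>j=1..d. lam j + p * (T - nu j))" by (simp only: T_def[symmetric])
  also have "\<dots> = \<Lambda> + p * (real d * T - T)"
    by (simp add: \<Lambda>_def sum.distrib sum_distrib_left[symmetric] sum_subtractf T_def)
  finally have TL: "T * (1 - (real d - 1) * p) = \<Lambda>" by (simp add: algebra_simps)
  have L0: "\<Lambda> \<ge> 0" unfolding \<Lambda>_def using lam_nonneg by (intro sum_nonneg) auto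
  show ?thesis
  proof (cases "p = 0")
    case True
    have P0: "\<forall>i\<in>{1..d}. \<forall>j\<in>{1..d}. P i j = 0" using P_diag P_const True by metis
    show ?thesis
    proof
      fix j assume j: "j \<in> {1..d}"
      have "lam j > 0" by (rule lam_pos_P0[OF hypA P0 j lam_nonneg])
      then show "nu j > 0" using tr[OF j] True by simp
    qed
  next
    case False
    hence pp: "p > 0" using p0 by simp
    obtain k where k: "k \<in> {1..d}" "lam k > 0" using lam_exists_pos[OF hypA] d by auto
    have "lam k \<le> \<Lambda>" unfolding \<Lambda>_def using k lam_nonneg by (intro member_le_sum) auto
    hence "\<Lambda> > 0" using k by simp
    hence Tp: "T > 0" using TL pb by (smt (verit) mult_nonpos_nonneg)
    show ?thesis
    proof
      fix j assume j: "j \<in> {1..d}"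
      have "nu j * (1 + p) = lam j + p * T" using tr[OF j] by (simp add: algebra_simps)
      moreover have "lam j + p * T > 0" using lam_nonneg j pp Tp by (simp add: add_nonneg_pos)
      ultimately show "nu j > 0" using pp by (smt (verit) mult_nonpos_nonneg)
    qed
  qed
qed

lemma sigma_cong:
  assumes "\<forall>j\<in>{1..d}. g j = h j"
  shows "Sigma_fun d q g = Sigma_fun d q h"
proof -
  have "(\<lambda>i. ln (1 + q * g i)) ` {1..d} = (\<lambda>i. ln (1 + q * h i)) ` {1..d}"
    using assms by (intro image_cong) auto
  then show ?thesis unfolding Sigma_fun_def using assms by (intro sum.cong) auto
qed

lemma sigma_top:
  assumes q: "0 \<le> (q::real)" and d: "d \<ge> 1"
    and b: "\<forall>j\<in>{1..d}. 0 \<le> g j \<and> g j \<le> T" and top: "\<exists>j\<in>{1..d}. g j = T"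
  shows "Sigma_fun d q g = (\<Sum>j=1..d. (ln (1 + q * T) - ln (1 + q * g j)) / (ln (1 + g j) - ln (1 + q * g j)))"
proof -
  have "Max ((\<lambda>i. ln (1 + q * g i)) ` {1..d}) = ln (1 + q * T)"
  proof (rule antisym)
    show "Max ((\<lambda>i. ln (1 + q * g i)) ` {1..d}) \<le> ln (1 + q * T)"
    proof (rule Max.boundedI)
      show "(\<lambda>i. ln (1 + q * g i)) ` {1..d} \<noteq> {}" using d by simp
      fix z assume "z \<in> (\<lambda>i. ln (1 + q * g i)) ` {1..d}"
      then obtain j where j: "j \<in> {1..d}" "z = ln (1 + q * g j)" by auto
      show "z \<le> ln (1 + q * T)" unfolding j(2) using b j(1) by (intro L_mono q) auto
    qed simp
    obtain j where "j \<in> {1..d}" "g j = T" using top by blast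
    then show "ln (1 + q * T) \<le> Max ((\<lambda>i. ln (1 + q * g i)) ` {1..d})"
      by (intro Max_ge_iff[THEN iffD2]) (auto intro!: bexI[of _ j])
  qed
  then show ?thesis by (simp add: Sigma_fun_def)
qed

lemma sigma_tendsto:
  assumes q: "0 \<le> (q::real)" "q < 1" and d: "d \<ge> 1"
    and lim: "\<forall>i\<in>{1..d}. ((\<lambda>l. h l i) \<longlongrightarrow> h0 i) F" and pos: "\<forall>i\<in>{1..d}. 0 < h0 i"
  shows "((\<lambda>l. Sigma_fun d q (h l)) \<longlongrightarrow> Sigma_fun d q h0) F"
  unfolding Sigma_fun_def
proof (intro tendsto_sum tendsto_divide tendsto_diff)
  have Llim: "((\<lambda>l. ln (1 + q * h l i)) \<longlongrightarrow> ln (1 + q * h0 i)) F" if i: "i \<in> {1..d}" for i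
  proof (rule tendsto_ln)
    show "((\<lambda>l. 1 + q * h l i) \<longlongrightarrow> 1 + q * h0 i) F" using lim i by (intro tendsto_intros) auto
    have "0 \<le> q * h0 i" using q pos i by (simp add: less_imp_le)
    then show "1 + q * h0 i \<noteq> 0" by linarith
  qed
  fix j assume j: "j \<in> {1..d}"
  show "((\<lambda>l. Max ((\<lambda>i. ln (1 + q * h l i)) ` {1..d})) \<longlongrightarrow> Max ((\<lambda>i. ln (1 + q * h0 i)) ` {1..d})) F"
    using d Llim by (intro tendsto_Max_fin) auto
  show "((\<lambda>l. ln (1 + q * h l j)) \<longlongrightarrow> ln (1 + q * h0 j)) F" using Llim j .
  show "((\<lambda>l. ln (1 + h l j)) \<longlongrightarrow> ln (1 + h0 j)) F"
  proof (rule tendsto_ln)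
    show "((\<lambda>l. 1 + h l j) \<longlongrightarrow> 1 + h0 j) F" using lim j by (intro tendsto_intros) auto
    show "1 + h0 j \<noteq> 0" using pos j by (smt (verit))
  qed
  show "((\<lambda>l. ln (1 + q * h l j)) \<longlongrightarrow> ln (1 + q * h0 j)) F" using Llim j .
  show "ln (1 + h0 j) - ln (1 + q * h0 j) \<noteq> 0" using c_pos[OF q, of "h0 j"] pos j by simp
qed

lemma ab_tendsto:
  assumes "((\<lambda>l. l) \<longlongrightarrow> m) F" "nu i \<noteq> 0"
  shows "((\<lambda>l. a_end mu nu l i) \<longlongrightarrow> a_end mu nu m i) F"
    and "((\<lambda>l. b_end mu nu l i) \<longlongrightarrow> b_end mu nu m i) F"
  unfolding a_end_def b_end_def using assms by (intro tendsto_intros; simp)+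

theorem proposition3p4:
  fixes d :: nat and lam mu nu :: "nat \<Rightarrow> real" and P :: "nat \<Rightarrow> nat \<Rightarrow> real" and p :: real
  assumes d: "d \<ge> 2"
    and lam_nonneg: "\<forall>i\<in>{1..d}. lam i \<ge> 0"
    and mu_pos: "\<forall>i\<in>{1..d}. mu i > 0"
    and P_nonneg: "\<forall>i\<in>{1..d}. \<forall>j\<in>{1..d}. P i j \<ge> 0"
    and P_diag: "\<forall>i\<in>{1..d}. P i i = 0"
    and P_sub: "\<forall>i\<in>{1..d}. (\<Sum>j=1..d. P i j) \<le> 1"
    and hypA: "kernel_irreducible d lam mu P"
    and traffic: "\<forall>j\<in>{1..d}. nu j = lam j + (\<Sum>i=1..d. nu i * P i j)"
    and hypB: "\<forall>i\<in>{1..d}. nu i < mu i"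
    and P_const: "\<forall>i\<in>{1..d}. \<forall>j\<in>{1..d}. i \<noteq> j \<longrightarrow> P i j = p"
    and p_bound: "p < 1 / (real d - 1)"
  defines "q \<equiv> p / (1 - (real d - 2) * p)"
  shows "Sup ((\<lambda>\<gamma>. Min ((\<lambda>i. \<gamma> i * (mu i / (1 + \<gamma> i) - nu i)) ` {1..d})) ` Gamma_set d P) = min_gap d mu nu
         \<longleftrightarrow> Sigma_fun d q (gamma_hat d mu nu) \<le> 1"
proof -
  have d1: "d \<ge> 1" using d by simp
  have ne: "{1..d} \<noteq> {}" using d by simp
  have "P 1 2 = p" using P_const d by auto
  hence p0: "0 \<le> p" using P_nonneg d by force
  have dm1: "real d - 1 > 0" using d by simp
  have pb: "(real d - 1) * p < 1" using p_bound dm1 by (simp add: field_simps)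
  have r1: "(real d - 2) * p < 1" using pb p0 by (smt (verit) mult_right_mono)
  have q0: "0 \<le> q" unfolding q_def using p0 r1 by simp
  have q1: "q < 1" unfolding q_def using pb r1 by (simp add: divide_simps algebra_simps)
  have vp: "\<forall>i\<in>{1..d}. \<forall>j\<in>{1..d}. visit_prob d P j i = (if j = i then 1 else q)"
    using visit_prob_formula[OF d P_diag P_const p0 r1] by (simp add: q_def)
  have nupos: "\<forall>j\<in>{1..d}. nu j > 0" by (rule nu_pos[OF d lam_nonneg P_diag P_const p0 pb hypA traffic])
  define gap where "gap = (\<lambda>i. (sqrt (mu i) - sqrt (nu i))\<^sup>2)"
  define m where "m = min_gap d mu nu"
  have m_le: "\<And>i. i \<in> {1..d} \<Longrightarrow> m \<le> gap i" by (simp add: m_def min_gap_def gap_def)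
  have "m \<in> gap ` {1..d}" unfolding m_def min_gap_def gap_def using ne by (intro Min_in) auto
  then obtain i0 where i0: "i0 \<in> {1..d}" "gap i0 = m" by auto
  have m_pos: "0 < m"
  proof -
    have "sqrt (nu i0) < sqrt (mu i0)" using hypB i0 by simp
    hence "0 < (sqrt (mu i0) - sqrt (nu i0))\<^sup>2" by (simp add: power2_eq_square)
    then show ?thesis using i0(2) unfolding gap_def by simp
  qed
  define fv where "fv = (\<lambda>(\<gamma>::nat\<Rightarrow>real) i. \<gamma> i * (mu i / (1 + \<gamma> i) - nu i))"
  define F where "F = (\<lambda>\<gamma>. Min ((\<lambda>i. \<gamma> i * (mu i / (1 + \<gamma> i) - nu i)) ` {1..d}))"
  have F_le: "\<And>\<gamma> i. i \<in> {1..d} \<Longrightarrow> F \<gamma> \<le> fv \<gamma> i" by (simp add: F_def fv_def)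
  have F_gt: "\<And>\<gamma> x. x < F \<gamma> \<longleftrightarrow> (\<forall>i\<in>{1..d}. x < fv \<gamma> i)" using ne by (simp add: F_def fv_def)
  have F_ge: "\<And>\<gamma> x. x \<le> F \<gamma> \<longleftrightarrow> (\<forall>i\<in>{1..d}. x \<le> fv \<gamma> i)" using ne by (simp add: F_def fv_def)
  have R: "\<And>l i. i \<in> {1..d} \<Longrightarrow> 0 < l \<Longrightarrow> l \<le> m \<Longrightarrow>
      0 < a_end mu nu l i \<and> a_end mu nu l i \<le> b_end mu nu l i \<and>
      (\<forall>t\<ge>0. l \<le> fv (\<lambda>_. t) i \<longleftrightarrow> a_end mu nu l i \<le> t \<and> t \<le> b_end mu nu l i)"
  proof -
    fix l i assume i: "i \<in> {1..d}" and l: "0 < l" "l \<le> m"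
    have lg: "l \<le> (sqrt (mu i) - sqrt (nu i))\<^sup>2" using m_le[OF i] l by (simp add: gap_def)
    have y: "0 < nu i" "nu i < mu i" using nupos hypB i by auto
    note rr = roots[OF y l(1) lg]
    show "?thesis l i" using rr unfolding a_end_def b_end_def fv_def by simp
  qed
  have GC: "\<And>\<gamma>. \<gamma> \<in> nonneg_vec d \<Longrightarrow> \<gamma> \<in> Gamma_set d P \<longleftrightarrow> (\<forall>j\<in>{1..d}. \<gamma> j > 0) \<and> Sigma_fun d q \<gamma> < 1"
    by (rule gamma_char[OF d vp q0 q1])
  have Gnn: "\<And>\<gamma>. \<gamma> \<in> Gamma_set d P \<Longrightarrow> \<gamma> \<in> nonneg_vec d" by (simp add: Gamma_set_def)
  define S where "S = F ` Gamma_set d P"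
  have Sbound: "\<And>x. x \<in> S \<Longrightarrow> x \<le> m"
  proof -
    fix x assume "x \<in> S"
    then obtain \<gamma> where g: "\<gamma> \<in> Gamma_set d P" "x = F \<gamma>" by (auto simp: S_def)
    have "0 \<le> \<gamma> i0" using Gnn[OF g(1)] i0 by (simp add: nonneg_vec_def)
    hence "fv \<gamma> i0 \<le> gap i0" unfolding fv_def gap_def using gap_bound nupos mu_pos i0 by simp
    then show "x \<le> m" using F_le[OF i0(1), of \<gamma>] g i0 by simp
  qed
  have Sne: "S \<noteq> {}"
  proof -
    define \<gamma>1 :: "nat \<Rightarrow> real" where "\<gamma>1 = (\<lambda>k. if k \<in> {1..d} then 1 else 0)"
    have nn: "\<gamma>1 \<in> nonneg_vec d" by (simp add: \<gamma>1_def nonneg_vec_def)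
    have "Sigma_fun d q \<gamma>1 = (\<Sum>j=1..d. (ln (1 + q * 1) - ln (1 + q * \<gamma>1 j)) / (ln (1 + \<gamma>1 j) - ln (1 + q * \<gamma>1 j)))"
      using q0 d1 by (intro sigma_top) (auto simp: \<gamma>1_def intro!: bexI[of _ 1])
    also have "\<dots> = 0" by (simp add: \<gamma>1_def)
    finally have "\<gamma>1 \<in> Gamma_set d P" using GC[OF nn] by (simp add: \<gamma>1_def)
    then show ?thesis by (auto simp: S_def)
  qed
  have bdd: "bdd_above S" using Sbound by (auto simp: bdd_above_def)
  have Sup_iff: "Sup S = m \<longleftrightarrow> (\<forall>e>0. \<exists>\<gamma>\<in>Gamma_set d P. m - e < F \<gamma>)"
  proof
    assume SS: "Sup S = m"
    show "\<forall>e>0. \<exists>\<gamma>\<in>Gamma_set d P. m - e < F \<gamma>"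
    proof (intro allI impI)
      fix e :: real assume e: "e > 0"
      have "m - e < Sup S" using SS e by simp
      then obtain x where "x \<in> S" "m - e < x" using less_cSup_iff[OF Sne bdd] by blast
      then show "\<exists>\<gamma>\<in>Gamma_set d P. m - e < F \<gamma>" by (auto simp: S_def)
    qed
  next
    assume A: "\<forall>e>0. \<exists>\<gamma>\<in>Gamma_set d P. m - e < F \<gamma>"
    show "Sup S = m"
    proof (rule antisym)
      show "Sup S \<le> m" using Sne Sbound by (intro cSup_least) auto
      show "m \<le> Sup S"
      proof (rule ccontr)
        assume "\<not> m \<le> Sup S"
        hence "m - Sup S > 0" by simp
        then obtain \<gamma> where g: "\<gamma> \<in> Gamma_set d P" "m - (m - Sup S) < F \<gamma>" using A by blast
        have "F \<gamma> \<le> Sup S" using g(1) bdd by (intro cSup_upper) (auto simp: S_def)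
        then show False using g by simp
      qed
    qed
  qed
  have main: "(\<forall>e>0. \<exists>\<gamma>\<in>Gamma_set d P. m - e < F \<gamma>) \<longleftrightarrow> Sigma_fun d q (gamma_hat d mu nu) \<le> 1"
  proof
    assume A: "\<forall>e>0. \<exists>\<gamma>\<in>Gamma_set d P. m - e < F \<gamma>"
    define G where "G = (\<lambda>l. Sigma_fun d q (\<lambda>i. min (b_end mu nu l i) (Max (a_end mu nu l ` {1..d}))))"
    have Gm: "G m = Sigma_fun d q (gamma_hat d mu nu)"
      by (simp add: G_def gamma_hat_def[abs_def] m_def)
    have G1: "\<forall>l. 0 < l \<and> l < m \<longrightarrow> G l \<le> 1"
    proof (intro allI impI)
      fix l assume l: "0 < l \<and> l < m"
      hence "m - l > 0" by simp
      then obtain \<gamma> where g: "\<gamma> \<in> Gamma_set d P" "m - (m - l) < F \<gamma>" using A by blast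
      have nn: "\<gamma> \<in> nonneg_vec d" using Gnn[OF g(1)] .
      have ab: "\<forall>j\<in>{1..d}. 0 < a_end mu nu l j \<and> a_end mu nu l j \<le> \<gamma> j \<and> \<gamma> j \<le> b_end mu nu l j"
      proof
        fix j assume j: "j \<in> {1..d}"
        have lt: "l < fv \<gamma> j" using g(2) F_gt j by simp
        have t0: "0 \<le> \<gamma> j" using nn j by (simp add: nonneg_vec_def)
        have Rj: "0 < a_end mu nu l j \<and> a_end mu nu l j \<le> b_end mu nu l j \<and>
          (\<forall>t\<ge>0. l \<le> fv (\<lambda>_. t) j \<longleftrightarrow> a_end mu nu l j \<le> t \<and> t \<le> b_end mu nu l j)"
          using R[OF j] l by simp
        have "fv (\<lambda>_. \<gamma> j) j = fv \<gamma> j" by (simp add: fv_def)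
        then show "0 < a_end mu nu l j \<and> a_end mu nu l j \<le> \<gamma> j \<and> \<gamma> j \<le> b_end mu nu l j"
          using Rj t0 lt by (metis less_imp_le)
      qed
      have "G l \<le> Sigma_fun d q \<gamma>" unfolding G_def by (rule sigma_min[OF q0 q1 d1 ab])
      also have "Sigma_fun d q \<gamma> < 1" using GC[OF nn] g(1) by blast
      finally show "G l \<le> 1" by simp
    qed
    have id: "((\<lambda>l. l) \<longlongrightarrow> m) (at_left m)" by (rule tendsto_ident_at)
    have lim: "(G \<longlongrightarrow> G m) (at_left m)"
      unfolding G_def
    proof (rule sigma_tendsto[OF q0 q1 d1])
      show "\<forall>i\<in>{1..d}. ((\<lambda>l. min (b_end mu nu l i) (Max (a_end mu nu l ` {1..d}))) \<longlongrightarrow>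
            min (b_end mu nu m i) (Max (a_end mu nu m ` {1..d}))) (at_left m)"
      proof
        fix i assume i: "i \<in> {1..d}"
        have nz: "nu i \<noteq> 0" using nupos i by force
        have "((\<lambda>l. Max ((\<lambda>k. a_end mu nu l k) ` {1..d})) \<longlongrightarrow> Max ((\<lambda>k. a_end mu nu m k) ` {1..d})) (at_left m)"
          using ne nupos by (intro tendsto_Max_fin) (auto intro!: ab_tendsto(1)[OF id] simp: less_imp_neq[symmetric])
        then show "((\<lambda>l. min (b_end mu nu l i) (Max (a_end mu nu l ` {1..d}))) \<longlongrightarrow>
            min (b_end mu nu m i) (Max (a_end mu nu m ` {1..d}))) (at_left m)"
          by (intro tendsto_min ab_tendsto(2)[where nu=nu and i=i, OF id nz]) simp
      qed
      show "\<forall>i\<in>{1..d}. 0 < min (b_end mu nu m i) (Max (a_end mu nu m ` {1..d}))"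
      proof
        fix i assume i: "i \<in> {1..d}"
        have Ri: "0 < a_end mu nu m i" "a_end mu nu m i \<le> b_end mu nu m i" using R[OF i m_pos order.refl] by auto
        have "a_end mu nu m i \<le> Max (a_end mu nu m ` {1..d})" using i by simp
        then show "0 < min (b_end mu nu m i) (Max (a_end mu nu m ` {1..d}))" using Ri by simp
      qed
    qed
    have ev: "eventually (\<lambda>l. G l \<le> 1) (at_left m)"
      using eventually_at_left_real[OF m_pos] G1 by (auto elim: eventually_mono)
    have "G m \<le> 1" by (rule tendsto_upperbound[OF lim ev]) simp
    then show "Sigma_fun d q (gamma_hat d mu nu) \<le> 1" using Gm by simp
  next
    assume B: "Sigma_fun d q (gamma_hat d mu nu) \<le> 1"
    define ah where "ah = Max (a_end mu nu m ` {1..d})"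
    define gh where "gh = gamma_hat d mu nu"
    have gh': "\<And>i. gh i = min (b_end mu nu m i) ah" by (simp add: gh_def gamma_hat_def ah_def m_def)
    have Rm: "\<And>i. i \<in> {1..d} \<Longrightarrow> 0 < a_end mu nu m i \<and> a_end mu nu m i \<le> b_end mu nu m i \<and>
          (\<forall>t\<ge>0. m \<le> fv (\<lambda>_. t) i \<longleftrightarrow> a_end mu nu m i \<le> t \<and> t \<le> b_end mu nu m i)"
      using R m_pos by simp
    have a_le_ah: "\<And>i. i \<in> {1..d} \<Longrightarrow> a_end mu nu m i \<le> ah" by (simp add: ah_def)
    have "ah \<in> a_end mu nu m ` {1..d}" unfolding ah_def using ne by (intro Max_in) auto
    then obtain i1 where i1: "i1 \<in> {1..d}" "a_end mu nu m i1 = ah" by auto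
    have gh_lo: "\<And>i. i \<in> {1..d} \<Longrightarrow> a_end mu nu m i \<le> gh i" using Rm a_le_ah gh' by simp
    have gh_hi: "\<And>i. gh i \<le> ah" using gh' by simp
    have gh_b: "\<And>i. gh i \<le> b_end mu nu m i" using gh' by simp
    have gh_pos: "\<And>i. i \<in> {1..d} \<Longrightarrow> 0 < gh i" using Rm gh_lo by (meson less_le_trans)
    have gh_i1: "gh i1 = ah" using gh' i1 Rm[OF i1(1)] by simp
    have fv_ge: "\<And>\<gamma> i. i \<in> {1..d} \<Longrightarrow> a_end mu nu m i \<le> \<gamma> i \<Longrightarrow> \<gamma> i \<le> b_end mu nu m i \<Longrightarrow> m \<le> fv \<gamma> i"
    proof -
      fix \<gamma> :: "nat \<Rightarrow> real" and i assume i: "i \<in> {1..d}" and lo: "a_end mu nu m i \<le> \<gamma> i" and hi: "\<gamma> i \<le> b_end mu nu m i"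
      have "0 \<le> \<gamma> i" using Rm[OF i] lo by linarith
      hence "m \<le> fv (\<lambda>_. \<gamma> i) i" using Rm[OF i] lo hi by blast
      then show "m \<le> fv \<gamma> i" by (simp add: fv_def)
    qed
    have Sgh: "Sigma_fun d q gh = (\<Sum>j=1..d. (ln (1 + q * ah) - ln (1 + q * gh j)) / (ln (1 + gh j) - ln (1 + q * gh j)))"
      using q0 d1 gh_pos gh_hi i1 gh_i1 by (intro sigma_top) (auto simp: less_imp_le)
    show "\<forall>e>0. \<exists>\<gamma>\<in>Gamma_set d P. m - e < F \<gamma>"
    proof (intro allI impI)
      fix e :: real assume e: "e > 0"
      show "\<exists>\<gamma>\<in>Gamma_set d P. m - e < F \<gamma>"
      proof (cases "Sigma_fun d q gh < 1")
        case True
        define \<gamma>' where "\<gamma>' = (\<lambda>k. if k \<in> {1..d} then gh k else 0)"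
        have nn: "\<gamma>' \<in> nonneg_vec d" using gh_pos by (auto simp: \<gamma>'_def nonneg_vec_def less_imp_le)
        have "Sigma_fun d q \<gamma>' = Sigma_fun d q gh" by (rule sigma_cong) (simp add: \<gamma>'_def)
        hence G': "\<gamma>' \<in> Gamma_set d P" using GC[OF nn] True gh_pos by (simp add: \<gamma>'_def)
        have "m \<le> F \<gamma>'" unfolding F_ge
        proof
          fix i assume i: "i \<in> {1..d}"
          show "m \<le> fv \<gamma>' i" using fv_ge[OF i] gh_lo[OF i] gh_b[of i] i by (simp add: \<gamma>'_def)
        qed
        then show ?thesis using G' e by force
      next
        case False
        hence S1: "Sigma_fun d q gh = 1" using B by (simp add: gh_def)
        have qpos: "q > 0"
        proof (rule ccontr)
          assume "\<not> q > 0"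
          hence "q = 0" using q0 by simp
          hence "Sigma_fun d q gh = 0" using Sgh by simp
          then show False using S1 by simp
        qed
        have "\<exists>j\<in>{1..d}. gh j < ah"
        proof (rule ccontr)
          assume "\<not> (\<exists>j\<in>{1..d}. gh j < ah)"
          hence "\<forall>j\<in>{1..d}. gh j = ah" using gh_hi by (meson order_le_less)
          hence "Sigma_fun d q gh = 0" using Sgh by simp
          then show False using S1 by simp
        qed
        then obtain j0 where j0: "j0 \<in> {1..d}" "gh j0 < ah" by blast
        define K where "K = (\<Sum>j=1..d. mu j + nu j)"
        have Kge: "\<And>i. i \<in> {1..d} \<Longrightarrow> mu i + nu i \<le> K"
          unfolding K_def using mu_pos nupos by (intro member_le_sum) (auto simp: add_nonneg_nonneg less_imp_le)
        have K0: "K \<ge> 0" using Kge[OF i1(1)] mu_pos nupos i1 by (smt (verit))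
        define \<delta> where "\<delta> = e / (1 + K)"
        have \<delta>0: "\<delta> > 0" using e K0 by (simp add: \<delta>_def)
        have \<delta>K: "K * \<delta> < e" using e K0 by (simp add: \<delta>_def field_simps)
        define \<gamma>d where "\<gamma>d = (\<lambda>k. if k \<in> {1..d} then min (gh k + \<delta>) ah else 0)"
        have d_lo: "\<And>k. k \<in> {1..d} \<Longrightarrow> gh k \<le> \<gamma>d k" using \<delta>0 gh_hi by (simp add: \<gamma>d_def)
        have d_hi: "\<And>k. k \<in> {1..d} \<Longrightarrow> \<gamma>d k \<le> ah" by (simp add: \<gamma>d_def)
        have d_diff: "\<And>k. k \<in> {1..d} \<Longrightarrow> \<bar>\<gamma>d k - gh k\<bar> \<le> \<delta>" using d_lo by (simp add: \<gamma>d_def)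
        have d_pos: "\<And>k. k \<in> {1..d} \<Longrightarrow> 0 < \<gamma>d k" using d_lo gh_pos by (meson less_le_trans)
        have d_i1: "\<gamma>d i1 = ah" using i1 gh_i1 \<delta>0 by (simp add: \<gamma>d_def)
        have nn: "\<gamma>d \<in> nonneg_vec d" using d_pos by (auto simp: \<gamma>d_def nonneg_vec_def less_imp_le)
        have Sd: "Sigma_fun d q \<gamma>d = (\<Sum>j=1..d. (ln (1 + q * ah) - ln (1 + q * \<gamma>d j)) / (ln (1 + \<gamma>d j) - ln (1 + q * \<gamma>d j)))"
          using q0 d1 d_pos d_hi i1 d_i1 by (intro sigma_top) (auto simp: less_imp_le)
        have "Sigma_fun d q \<gamma>d < Sigma_fun d q gh"
          unfolding Sd Sgh
        proof (rule sum_strict_mono_ex1)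
          show "finite {1..d}" by simp
          show "\<forall>j\<in>{1..d}. (ln (1 + q * ah) - ln (1 + q * \<gamma>d j)) / (ln (1 + \<gamma>d j) - ln (1 + q * \<gamma>d j))
              \<le> (ln (1 + q * ah) - ln (1 + q * gh j)) / (ln (1 + gh j) - ln (1 + q * gh j))"
          proof
            fix j assume j: "j \<in> {1..d}"
            have "ln (1 + q * \<gamma>d j) \<le> ln (1 + q * ah)" using L_mono[OF q0 _ d_hi[OF j]] d_pos[OF j] by simp
            then show "(ln (1 + q * ah) - ln (1 + q * \<gamma>d j)) / (ln (1 + \<gamma>d j) - ln (1 + q * \<gamma>d j))
              \<le> (ln (1 + q * ah) - ln (1 + q * gh j)) / (ln (1 + gh j) - ln (1 + q * gh j))"
              by (rule term_le[OF q0 q1 gh_pos[OF j] d_lo[OF j]])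
          qed
          have lt: "gh j0 < \<gamma>d j0" using j0 \<delta>0 by (simp add: \<gamma>d_def)
          have "ln (1 + q * \<gamma>d j0) \<le> ln (1 + q * ah)" using L_mono[OF q0 _ d_hi[OF j0(1)]] d_pos[OF j0(1)] by simp
          then have "(ln (1 + q * ah) - ln (1 + q * \<gamma>d j0)) / (ln (1 + \<gamma>d j0) - ln (1 + q * \<gamma>d j0))
              < (ln (1 + q * ah) - ln (1 + q * gh j0)) / (ln (1 + gh j0) - ln (1 + q * gh j0))"
            by (rule term_less[OF qpos q1 gh_pos[OF j0(1)] lt])
          then show "\<exists>j\<in>{1..d}. (ln (1 + q * ah) - ln (1 + q * \<gamma>d j)) / (ln (1 + \<gamma>d j) - ln (1 + q * \<gamma>d j))
              < (ln (1 + q * ah) - ln (1 + q * gh j)) / (ln (1 + gh j) - ln (1 + q * gh j))"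
            using j0(1) by blast
        qed
        hence Gd: "\<gamma>d \<in> Gamma_set d P" using GC[OF nn] S1 d_pos by simp
        have "m - e < F \<gamma>d" unfolding F_gt
        proof
          fix i assume i: "i \<in> {1..d}"
          have m_le_gh: "m \<le> fv gh i" using fv_ge[of i gh, OF i gh_lo[OF i] gh_b[of i]] .
          have lip: "fv \<gamma>d i \<ge> fv gh i - (mu i + nu i) * \<bar>\<gamma>d i - gh i\<bar>"
            unfolding fv_def
            using lip_bound[of "\<gamma>d i" "gh i" "nu i" "mu i"] d_pos[OF i] gh_pos[OF i] nupos mu_pos i
            by (simp add: less_imp_le)
          have "(mu i + nu i) * \<bar>\<gamma>d i - gh i\<bar> \<le> (mu i + nu i) * \<delta>"
            using d_diff[OF i] mu_pos nupos i by (intro mult_left_mono) (auto simp: add_nonneg_nonneg less_imp_le)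
          also have "\<dots> \<le> K * \<delta>" using Kge[OF i] \<delta>0 by (simp add: mult_right_mono)
          finally show "m - e < fv \<gamma>d i" using lip m_le_gh \<delta>K by linarith
        qed
        then show ?thesis using Gd by blast
      qed
    qed
  qed
  show ?thesis using Sup_iff main unfolding S_def F_def m_def by simp
qed

end
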